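(* Consider the following ten pairs of integer sequences $(\boldsymbol{a};\boldsymbol{b})$: $((2,2,1,1);(2,0,0,0,0))$, $((2,2,2);(2,1,0,0))$, $((2,2,2,1);(2,1,1,0,0))$, $((2,2,2,2);(3,1,0,0,0))$, $((2,2,2,2);(2,2,1,0,0))$, $((2,2,2,2);(2,1,1,1,1))$, $((3,2,2);(3,1,0,0))$, $((3,3);(3,1,0))$, $((3,3,2);(3,2,1,0))$, $((3,3,2);(4,0,0,0))$. For each such pair, with $\boldsymbol{a}=(a_1,\dots,a_s)$ and $\boldsymbol{b}=(b_1,\dots,b_{s+1})$, if there exists a minimal monad on $\mathbb{P}^3$ of the form $$\bigoplus_{i=1}^{s}\mathcal{O}(-a_i-1)\xrightarrow{\alpha}\bigoplus_{j=1}^{s+1}\big(\mathcal{O}(b_j)\oplus\mathcal{O}(-b_j-1)\big)\xrightarrow{\beta}\bigoplus_{i=1}^{s}\mathcal{O}(a_i)$$ whose cohomology is a rank $2$ vector bundle, then this cohomology is not a stable bundle.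
   Context: Work on $\mathbb{P}^3$ over an algebraically closed field; $\mathcal{O}=\mathcal{O}_{\mathbb{P}^3}$. A monad is a complex $\mathcal{C}\xrightarrow{\alpha}\mathcal{B}\xrightarrow{\beta}\mathcal{A}$ of vector bundles with $\alpha$ injective and $\beta$ surjective, with cohomology $\ker\beta/\operatorname{Im}\alpha$; it is minimal if no entry of the matrices of $\alpha,\beta$ (homogeneous forms) is a nonzero constant. A rank 2 bundle with $c_1=-1$ (which is the first Chern class of the cohomology of any such monad) is stable iff it has no nonzero global sections. *)

theory Defs
  imports Main "HOL-Library.Poly_Mapping" "HOL-Computational_Algebra.Polynomial"
begin

text \<open>Polynomials in the four homogeneous coordinates x_0,...,x_3 of P^3 over a field 'k:
  a polynomial is a finitely supported map from monomials (exponent vectors nat =>0 nat)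
  to coefficients; multiplication is the Poly_Mapping convolution.\<close>

type_synonym 'k mpoly = "(nat \<Rightarrow>\<^sub>0 nat) \<Rightarrow>\<^sub>0 'k"

definition alg_closed_field :: "'k::field itself \<Rightarrow> bool" where
  "alg_closed_field _ \<longleftrightarrow> (\<forall>p :: 'k poly. degree p > 0 \<longrightarrow> (\<exists>x. poly p x = 0))"

definition homog :: "int \<Rightarrow> ('k::zero) mpoly \<Rightarrow> bool" where
  "homog d p \<longleftrightarrow> (\<forall>m \<in> Poly_Mapping.keys p. Poly_Mapping.keys (m::nat \<Rightarrow>\<^sub>0 nat) \<subseteq> {..<4::nat} \<and> int (\<Sum>v<4. Poly_Mapping.lookup m v) = d)"

definition is_const :: "'k::zero mpoly \<Rightarrow> bool" where
  "is_const p \<longleftrightarrow> Poly_Mapping.keys p \<subseteq> {0}"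

definition eval_mpoly :: "'k::comm_semiring_1 mpoly \<Rightarrow> (nat \<Rightarrow> 'k) \<Rightarrow> 'k" where
  "eval_mpoly p x = (\<Sum>m\<in>Poly_Mapping.keys p. Poly_Mapping.lookup p m * (\<Prod>v<4. x v ^ Poly_Mapping.lookup m v))"

text \<open>A morphism  (+)_j O(src!j) --> (+)_i O(tgt!i)  is a matrix M (row i, column j)
  whose (i,j) entry is a form of degree tgt!i - src!j.\<close>
definition sheaf_map :: "int list \<Rightarrow> int list \<Rightarrow> (nat \<Rightarrow> nat \<Rightarrow> 'k::zero mpoly) \<Rightarrow> bool" where
  "sheaf_map src tgt M \<longleftrightarrow> (\<forall>i<length tgt. \<forall>j<length src. homog (tgt!i - src!j) (M i j))"

definition minimal_map :: "int list \<Rightarrow> int list \<Rightarrow> (nat \<Rightarrow> nat \<Rightarrow> 'k::zero mpoly) \<Rightarrow> bool" where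
  "minimal_map src tgt M \<longleftrightarrow>
     (\<forall>i<length tgt. \<forall>j<length src. is_const (M i j) \<longrightarrow> M i j = 0)"

definition point_P3 :: "(nat \<Rightarrow> 'k::zero) \<Rightarrow> bool" where
  "point_P3 x \<longleftrightarrow> (\<exists>v<4. x v \<noteq> 0)"

definition fiber_injective :: "int list \<Rightarrow> int list \<Rightarrow> (nat \<Rightarrow> nat \<Rightarrow> 'k::field mpoly) \<Rightarrow> bool" where
  "fiber_injective src tgt M \<longleftrightarrow>
     (\<forall>x. point_P3 x \<longrightarrow> (\<forall>c :: nat \<Rightarrow> 'k.
        (\<forall>i<length tgt. (\<Sum>j<length src. eval_mpoly (M i j) x * c j) = 0)
        \<longrightarrow> (\<forall>j<length src. c j = 0)))"

definition fiber_surjective :: "int list \<Rightarrow> int list \<Rightarrow> (nat \<Rightarrow> nat \<Rightarrow> 'k::field mpoly) \<Rightarrow> bool" where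
  "fiber_surjective src tgt M \<longleftrightarrow>
     (\<forall>x. point_P3 x \<longrightarrow> (\<forall>y :: nat \<Rightarrow> 'k. \<exists>c :: nat \<Rightarrow> 'k.
        \<forall>i<length tgt. (\<Sum>j<length src. eval_mpoly (M i j) x * c j) = y i))"

definition comp_zero :: "int list \<Rightarrow> int list \<Rightarrow> int list
     \<Rightarrow> (nat \<Rightarrow> nat \<Rightarrow> 'k::field mpoly) \<Rightarrow> (nat \<Rightarrow> nat \<Rightarrow> 'k mpoly) \<Rightarrow> bool" where
  "comp_zero C B A \<alpha> \<beta> \<longleftrightarrow>
     (\<forall>i<length A. \<forall>k<length C. (\<Sum>j<length B. \<beta> i j * \<alpha> j k) = 0)"

text \<open>Twists of the summands of the monad
  (+)_i O(-a_i-1) --> (+)_j (O(b_j) (+) O(-b_j-1)) --> (+)_i O(a_i).\<close>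
definition twC :: "int list \<Rightarrow> int list" where "twC a = map (\<lambda>t. - t - 1) a"
definition twB :: "int list \<Rightarrow> int list" where "twB b = b @ map (\<lambda>t. - t - 1) b"
definition twA :: "int list \<Rightarrow> int list" where "twA a = a"

text \<open>A minimal monad of the given shape whose cohomology is a (rank 2) vector bundle:
  alpha fibrewise injective, beta fibrewise surjective, beta o alpha = 0.\<close>
definition minimal_monad :: "int list \<Rightarrow> int list
     \<Rightarrow> (nat \<Rightarrow> nat \<Rightarrow> 'k::field mpoly) \<Rightarrow> (nat \<Rightarrow> nat \<Rightarrow> 'k mpoly) \<Rightarrow> bool" where
  "minimal_monad a b \<alpha> \<beta> \<longleftrightarrow>
     length b = length a + 1 \<and>
     sheaf_map (twC a) (twB b) \<alpha> \<and> sheaf_map (twB b) (twA a) \<beta> \<and>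
     minimal_map (twC a) (twB b) \<alpha> \<and> minimal_map (twB b) (twA a) \<beta> \<and>
     comp_zero (twC a) (twB b) (twA a) \<alpha> \<beta> \<and>
     fiber_injective (twC a) (twB b) \<alpha> \<and> fiber_surjective (twB b) (twA a) \<beta>"

text \<open>Global sections of (+)_j O(tw!j): tuples of forms of the right degrees.\<close>
definition H0 :: "int list \<Rightarrow> (nat \<Rightarrow> 'k::zero mpoly) set" where
  "H0 tw = {f. (\<forall>j<length tw. homog (tw!j) (f j)) \<and> (\<forall>j\<ge>length tw. f j = 0)}"

definition apply_map :: "nat \<Rightarrow> nat \<Rightarrow> (nat \<Rightarrow> nat \<Rightarrow> 'k::field mpoly) \<Rightarrow> (nat \<Rightarrow> 'k mpoly) \<Rightarrow> (nat \<Rightarrow> 'k mpoly)" where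
  "apply_map nrows ncols M f = (\<lambda>i. if i < nrows then (\<Sum>j<ncols. M i j * f j) else 0)"

text \<open>The cohomology E = ker beta / im alpha has a nonzero global section: a global section of
  B killed by beta that is not the image of a global section of C
  (H^0(E) = ker H^0(beta) / im H^0(alpha), as H^1 of a sum of line bundles on P^3 vanishes).\<close>
definition cohomology_has_nonzero_section :: "int list \<Rightarrow> int list
     \<Rightarrow> (nat \<Rightarrow> nat \<Rightarrow> 'k::field mpoly) \<Rightarrow> (nat \<Rightarrow> nat \<Rightarrow> 'k mpoly) \<Rightarrow> bool" where
  "cohomology_has_nonzero_section a b \<alpha> \<beta> \<longleftrightarrow>
     (\<exists>f \<in> H0 (twB b). (\<forall>i. apply_map (length (twA a)) (length (twB b)) \<beta> f i = 0) \<and>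
        f \<notin> apply_map (length (twB b)) (length (twC a)) \<alpha> ` H0 (twC a))"

text \<open>Rank 2 bundle with c_1 = -1: stable iff no nonzero global sections.\<close>
definition cohomology_stable :: "int list \<Rightarrow> int list
     \<Rightarrow> (nat \<Rightarrow> nat \<Rightarrow> 'k::field mpoly) \<Rightarrow> (nat \<Rightarrow> nat \<Rightarrow> 'k mpoly) \<Rightarrow> bool" where
  "cohomology_stable a b \<alpha> \<beta> \<longleftrightarrow> \<not> cohomology_has_nonzero_section a b \<alpha> \<beta>"

definition prop5_pairs :: "(int list \<times> int list) set" where
  "prop5_pairs = {
     ([2,2,1,1], [2,0,0,0,0]),
     ([2,2,2], [2,1,0,0]),
     ([2,2,2,1], [2,1,1,0,0]),
     ([2,2,2,2], [3,1,0,0,0]),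
     ([2,2,2,2], [2,2,1,0,0]),
     ([2,2,2,2], [2,1,1,1,1]),
     ([3,2,2], [3,1,0,0]),
     ([3,3], [3,1,0]),
     ([3,3,2], [3,2,1,0]),
     ([3,3,2], [4,0,0,0])}"

end

theory Submission
  imports Defs
begin

lemma homog_neg: assumes "d < 0" "homog d p" shows "p = 0"
proof (rule ccontr)
  assume "p \<noteq> 0"
  then obtain m where "m \<in> Poly_Mapping.keys p"
    by (metis all_not_in_conv keys_eq_empty)
  with assms(2) have "int (\<Sum>v<4. Poly_Mapping.lookup m v) = d" unfolding homog_def by blast
  with assms(1) show False by linarith
qed

lemma homog0_const: assumes "homog 0 p" shows "is_const p"
  unfolding is_const_def
proof
  fix m assume m: "m \<in> Poly_Mapping.keys p"
  with assms have k: "Poly_Mapping.keys m \<subseteq> {..<4}" and s: "int (\<Sum>v<4. Poly_Mapping.lookup m v) = 0"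
    unfolding homog_def by blast+
  have "\<forall>v. Poly_Mapping.lookup m v = 0"
  proof
    fix v show "Poly_Mapping.lookup m v = 0"
    proof (cases "v < 4")
      case True
      have "(\<Sum>v<4. Poly_Mapping.lookup m v) = 0" using s by (simp only: of_nat_eq_0_iff)
      then show ?thesis using True by simp
    next
      case False then show ?thesis using k by (meson in_keys_iff lessThan_iff subsetD)
    qed
  qed
  then have "m = 0" by (simp add: poly_mapping_eqI)
  then show "m \<in> {0}" by simp
qed

lemma homog_single: assumes "0 \<le> d"
  shows "homog d (Poly_Mapping.single (Poly_Mapping.single (0::nat) (nat d)) (1::'k::zero_neq_one))"
  unfolding homog_def using assms
  by (auto simp: lookup_single when_def)

lemma key:
  fixes \<alpha> \<beta> :: "nat \<Rightarrow> nat \<Rightarrow> 'k::field mpoly"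
  assumes len: "length b = length a + 1"
    and sm: "sheaf_map (twB b) (twA a) \<beta>" and mm: "minimal_map (twB b) (twA a) \<beta>"
    and b0: "0 \<le> b!0" and ab: "\<forall>x\<in>set a. x \<le> b!0" and a0: "\<forall>x\<in>set a. 0 \<le> x"
  shows "cohomology_has_nonzero_section a b \<alpha> \<beta>"
proof -
  define p :: "'k mpoly" where "p = Poly_Mapping.single (Poly_Mapping.single (0::nat) (nat (b!0))) 1"
  define f :: "nat \<Rightarrow> 'k mpoly" where "f = (\<lambda>j. if j = 0 then p else 0)"
  have p0: "p \<noteq> 0"
  proof
    assume "p = 0"
    then have "Poly_Mapping.keys p = {}" by simp
    then show False unfolding p_def by (simp add: keys_single)
  qed
  have tb0: "twB b ! 0 = b ! 0" using len unfolding twB_def by (simp add: nth_append)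
  have ltb: "length (twB b) = 2 * length b" unfolding twB_def by simp
  have fH: "f \<in> H0 (twB b)"
    unfolding H0_def f_def using homog_single[OF b0] tb0 len ltb
    by (auto simp: p_def homog_def)
  have bz: "\<beta> i 0 = 0" if "i < length a" for i
  proof -
    have h: "homog (a!i - b!0) (\<beta> i 0)"
    proof -
      have "homog (a!i - twB b ! 0) (\<beta> i 0)"
        using sm that len ltb unfolding sheaf_map_def twA_def by simp
      then show ?thesis using tb0 by simp
    qed
    have le: "a!i \<le> b!0" using ab that by auto
    show ?thesis
    proof (cases "a!i = b!0")
      case True
      then have "is_const (\<beta> i 0)" using h homog0_const by simp
      then show ?thesis using mm that len ltb unfolding minimal_map_def twA_def by auto
    next
      case False
      then show ?thesis using homog_neg[OF _ h] le by simp
    qed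
  qed
  have ker: "\<forall>i. apply_map (length (twA a)) (length (twB b)) \<beta> f i = 0"
    unfolding apply_map_def twA_def
  proof (intro allI)
    fix i
    show "(if i < length a then \<Sum>j<length (twB b). \<beta> i j * f j else 0) = 0"
    proof (cases "i < length a")
      case True
      have "(\<Sum>j<length (twB b). \<beta> i j * f j) = (\<Sum>j<length (twB b). if j = 0 then \<beta> i 0 * p else 0)"
        by (rule sum.cong) (auto simp: f_def)
      also have "\<dots> = 0" using bz[OF True] by simp
      finally show ?thesis by simp
    qed simp
  qed
  have notim: "f \<notin> apply_map (length (twB b)) (length (twC a)) \<alpha> ` H0 (twC a)"
  proof
    assume "f \<in> apply_map (length (twB b)) (length (twC a)) \<alpha> ` H0 (twC a)"
    then obtain g where g: "g \<in> H0 (twC a)" and fg: "f = apply_map (length (twB b)) (length (twC a)) \<alpha> g"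
      by blast
    have gz: "g j = 0" if "j < length (twC a)" for j
    proof -
      have "homog (twC a ! j) (g j)" using g that unfolding H0_def by auto
      moreover have "twC a ! j < 0"
      proof -
        have "j < length a" using that unfolding twC_def by simp
        then have "a!j \<in> set a" by (rule nth_mem)
        then have "0 \<le> a!j" using a0 by blast
        then show ?thesis using \<open>j < length a\<close> unfolding twC_def by simp
      qed
      ultimately show ?thesis using homog_neg by blast
    qed
    have "f 0 = 0" unfolding fg apply_map_def using gz by simp
    then show False using p0 unfolding f_def by simp
  qed
  show ?thesis unfolding cohomology_has_nonzero_section_def using fH ker notim by blast
qed

theorem proposition5:
  fixes \<alpha> \<beta> :: "nat \<Rightarrow> nat \<Rightarrow> 'k::field mpoly"
  assumes "alg_closed_field TYPE('k)"
    and "(a, b) \<in> prop5_pairs"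
    and "minimal_monad a b \<alpha> \<beta>"
  shows "\<not> cohomology_stable a b \<alpha> \<beta>"
proof -
  have m: "length b = length a + 1" "sheaf_map (twB b) (twA a) \<beta>" "minimal_map (twB b) (twA a) \<beta>"
    using assms(3) unfolding minimal_monad_def by auto
  have c: "0 \<le> b!0 \<and> (\<forall>x\<in>set a. x \<le> b!0) \<and> (\<forall>x\<in>set a. 0 \<le> x)"
    using assms(2) unfolding prop5_pairs_def by auto
  show ?thesis unfolding cohomology_stable_def using key[OF m] c by blast
qed

end
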